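(* Let $M$ be a complete pointed metric space and $Y$ a real Banach space. If $Y_1$ is an absolute summand of $Y$ and $\mathrm{A}(M,Y)$ is dense in $\mathrm{Lip}_0(M,Y)$, then $\mathrm{A}(M,Y_1)$ is dense in $\mathrm{Lip}_0(M,Y_1)$.
   Context: Throughout, metric spaces are complete and pointed, with base point $0$. $\mathrm{Lip}_0(M,Y)$ is the Banach space of Lipschitz maps $f:M\to Y$ with $f(0)=0$, normed by $\|f\|=\sup_{p\neq q}\|f(p)-f(q)\|/d(p,q)$. A map $f$ attains its norm toward $y\in Y$ if there is a sequence $(p_n,q_n)$ in $M\times M$ with $p_n\neq q_n$ such that $[f(p_n)-f(q_n)]/d(p_n,q_n)\to y$ and $\|y\|=\|f\|$; $\mathrm{A}(M,Y)$ is the set of $f$ attaining their norm toward some vector. An absolute norm $|\cdot|_a$ on $\mathbb{R}^2$ is a norm with $|(1,0)|_a=|(0,1)|_a=1$ and $|(p,q)|_a=|(|p|,|q|)|_a$ for all $p,q$. The absolute sum $Y_1\oplus_a Y_2$ of Banach spaces $Y_1,Y_2$ is $Y_1\times Y_2$ with the norm $\|(y_1,y_2)\|_a=|(\|y_1\|,\|y_2\|)|_a$. A Banach space $Y_1$ is an absolute summand of $Y$ if $Y=Y_1\oplus_a Y_2$ (isometrically) for some Banach space $Y_2$ and some absolute norm $|\cdot|_a$. *)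

theory Defs
  imports "HOL-Analysis.Analysis"
begin

definition Lip0 :: "'m::metric_space \<Rightarrow> ('m \<Rightarrow> 'y::real_normed_vector) set" where
  "Lip0 p0 = {f. f p0 = 0 \<and> (\<exists>C. C-lipschitz_on UNIV f)}"

text \<open>Lipschitz norm (0 is included so that a one-point space gives norm 0).\<close>
definition lipnorm :: "('m::metric_space \<Rightarrow> 'y::real_normed_vector) \<Rightarrow> real" where
  "lipnorm f = Sup ({0} \<union> {norm (f p - f q) / dist p q | p q. p \<noteq> q})"

definition attains_norm_toward :: "('m::metric_space \<Rightarrow> 'y::real_normed_vector) \<Rightarrow> 'y \<Rightarrow> bool" where
  "attains_norm_toward f y \<longleftrightarrow>
     (\<exists>p q :: nat \<Rightarrow> 'm. (\<forall>n. p n \<noteq> q n) \<and>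
        ((\<lambda>n. (1 / dist (p n) (q n)) *\<^sub>R (f (p n) - f (q n))) \<longlongrightarrow> y) sequentially \<and>
        norm y = lipnorm f)"

definition NA :: "'m::metric_space \<Rightarrow> ('m \<Rightarrow> 'y::real_normed_vector) set" where
  "NA p0 = {f \<in> Lip0 p0. \<exists>y. attains_norm_toward f y}"

definition dense_in_Lip0 :: "'m::metric_space \<Rightarrow> ('m \<Rightarrow> 'y::real_normed_vector) set \<Rightarrow> bool" where
  "dense_in_Lip0 p0 S \<longleftrightarrow> (\<forall>f \<in> Lip0 p0. \<forall>e>0. \<exists>g \<in> S. lipnorm (f - g) < e)"

definition absolute_norm :: "(real \<times> real \<Rightarrow> real) \<Rightarrow> bool" where
  "absolute_norm N \<longleftrightarrow>
     (\<forall>x. N x = 0 \<longleftrightarrow> x = 0) \<and>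
     (\<forall>x y. N (x + y) \<le> N x + N y) \<and>
     (\<forall>c x. N (c *\<^sub>R x) = \<bar>c\<bar> * N x) \<and>
     N (1, 0) = 1 \<and> N (0, 1) = 1 \<and>
     (\<forall>a b. N (a, b) = N (\<bar>a\<bar>, \<bar>b\<bar>))"

text \<open>Y1 is an absolute summand of Y, witnessed by a complement Y2, an absolute norm N
  and a linear isometric isomorphism T : Y \<rightarrow> Y1 \<oplus>_N Y2.\<close>
definition absolute_sum_decomp ::
  "('y::real_normed_vector \<Rightarrow> 'y1::real_normed_vector \<times> 'y2::real_normed_vector) \<Rightarrow> (real \<times> real \<Rightarrow> real) \<Rightarrow> bool" where
  "absolute_sum_decomp T N \<longleftrightarrow> absolute_norm N \<and> linear T \<and> bij T \<and>
     (\<forall>y. norm y = N (norm (fst (T y)), norm (snd (T y))))"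

end

theory Submission
  imports Defs
begin


lemma lipnorm_bound:
  fixes f :: "'m::metric_space \<Rightarrow> 'y::real_normed_vector"
  assumes "C-lipschitz_on UNIV f"
  shows "norm (f p - f q) \<le> lipnorm f * dist p q"
proof (cases "p = q")
  case True then show ?thesis by simp
next
  case False
  let ?S = "{0} \<union> {norm (f p - f q) / dist p q | p q. p \<noteq> q}"
  have bdd: "bdd_above ?S"
  proof (rule bdd_aboveI[where M=C])
    fix x assume "x \<in> ?S"
    then show "x \<le> C"
    proof
      assume "x \<in> {0}" then show ?thesis using lipschitz_on_nonneg[OF assms] by simp
    next
      assume "x \<in> {norm (f p - f q) / dist p q | p q. p \<noteq> q}"
      then obtain a b where "a \<noteq> b" "x = norm (f a - f b) / dist a b" by blast
      moreover have "norm (f a - f b) \<le> C * dist a b"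
        using lipschitz_onD[OF assms, of a b] by (simp add: dist_norm)
      ultimately show ?thesis by (simp add: divide_le_eq)
    qed
  qed
  have "norm (f p - f q) / dist p q \<in> ?S" using False by blast
  then have "norm (f p - f q) / dist p q \<le> lipnorm f"
    unfolding lipnorm_def by (rule cSup_upper[OF _ bdd])
  then show ?thesis using False by (simp add: divide_le_eq)
qed



lemma lipnorm_least:
  fixes f :: "'m::metric_space \<Rightarrow> 'y::real_normed_vector"
  assumes "0 \<le> C" "\<And>p q. norm (f p - f q) \<le> C * dist p q"
  shows "lipnorm f \<le> C"
  unfolding lipnorm_def
proof (rule cSup_least)
  fix x assume "x \<in> {0} \<union> {norm (f p - f q) / dist p q | p q. p \<noteq> q}"
  then show "x \<le> C" using assms by (auto simp: divide_le_eq)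
qed simp

lemma lipschitzI':
  fixes f :: "'m::metric_space \<Rightarrow> 'y::real_normed_vector"
  assumes "0 \<le> C" "\<And>p q. norm (f p - f q) \<le> C * dist p q"
  shows "C-lipschitz_on UNIV f"
  using assms by (auto simp: lipschitz_on_def dist_norm)

lemma Lip0_lipschitz:
  assumes "f \<in> Lip0 p0" obtains C where "C-lipschitz_on UNIV f"
  using assms by (auto simp: Lip0_def)

lemma lipnorm_nonneg':
  fixes f :: "'m::metric_space \<Rightarrow> 'y::real_normed_vector"
  assumes "C-lipschitz_on UNIV f"
  shows "0 \<le> lipnorm f"
proof -
  have bdd: "bdd_above ({0} \<union> {norm (f p - f q) / dist p q | p q. p \<noteq> q})"
  proof (rule bdd_aboveI[where M=C])
    fix x assume "x \<in> {0} \<union> {norm (f p - f q) / dist p q | p q. p \<noteq> q}"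
    then show "x \<le> C"
      using lipschitz_on_nonneg[OF assms] lipschitz_onD[OF assms]
      by (auto simp: dist_norm divide_le_eq)
  qed
  show ?thesis unfolding lipnorm_def by (rule cSup_upper[OF _ bdd]) simp
qed

lemma lim_le_lipnorm:
  fixes f :: "'m::metric_space \<Rightarrow> 'y::real_normed_vector"
  assumes "C-lipschitz_on UNIV f"
    and "((\<lambda>n. (1 / dist (p n) (q n)) *\<^sub>R (f (p n) - f (q n))) \<longlongrightarrow> y) sequentially"
  shows "norm y \<le> lipnorm f"
proof -
  have "((\<lambda>n. norm ((1 / dist (p n) (q n)) *\<^sub>R (f (p n) - f (q n)))) \<longlongrightarrow> norm y) sequentially"
    using assms(2) by (rule tendsto_norm)
  moreover have "norm ((1 / dist (p n) (q n)) *\<^sub>R (f (p n) - f (q n))) \<le> lipnorm f" for n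
  proof (cases "p n = q n")
    case True then show ?thesis using lipnorm_nonneg'[OF assms(1)] by simp
  next
    case False
    then show ?thesis using lipnorm_bound[OF assms(1), of "p n" "q n"]
      by (simp add: divide_le_eq)
  qed
  ultimately show ?thesis using LIMSEQ_le_const2 by blast
qed



lemma absN_facts:
  assumes "absolute_norm N"
  shows "N (x, 0) = \<bar>x\<bar>" "N (0, y) = \<bar>y\<bar>" "\<bar>x\<bar> \<le> N (x, y)" "\<bar>y\<bar> \<le> N (x, y)"
    "N (x, y) \<le> \<bar>x\<bar> + \<bar>y\<bar>" "0 \<le> N (x,y)"
    "N (x + x', y + y') \<le> N (x, y) + N (x', y')"
    "N (x, y) = N (\<bar>x\<bar>, \<bar>y\<bar>)"
proof -
  have hom: "\<And>c v. N (c *\<^sub>R v) = \<bar>c\<bar> * N v" and tri: "\<And>u v. N (u + v) \<le> N u + N v"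
    and n1: "N (1,0) = 1" and n2: "N (0,1) = 1" and ab: "\<And>a b. N (a, b) = N (\<bar>a\<bar>, \<bar>b\<bar>)"
    using assms unfolding absolute_norm_def by auto
  show x0: "N (x, 0) = \<bar>x\<bar>" for x using hom[of x "(1,0)"] n1 by simp
  show y0: "N (0, y) = \<bar>y\<bar>" for y using hom[of y "(0,1)"] n2 by simp
  show "N (x + x', y + y') \<le> N (x, y) + N (x', y')" using tri[of "(x,y)" "(x',y')"] by simp
  show "N (x, y) = N (\<bar>x\<bar>, \<bar>y\<bar>)" by (rule ab)
  have "N (2*x, 0) \<le> N (x, y) + N (x, -y)" using tri[of "(x,y)" "(x,-y)"] by simp
  moreover have "N (x, -y) = N (x, y)" using ab[of x "-y"] ab[of x y] by simp
  ultimately show "\<bar>x\<bar> \<le> N (x, y)" using x0[of "2*x"] by simp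
  have "N (0, 2*y) \<le> N (x, y) + N (-x, y)" using tri[of "(x,y)" "(-x,y)"] by simp
  moreover have "N (-x, y) = N (x, y)" using ab[of "-x" y] ab[of x y] by simp
  ultimately show "\<bar>y\<bar> \<le> N (x, y)" using y0[of "2*y"] by simp
  then show "0 \<le> N (x,y)" by linarith
  show "N (x, y) \<le> \<bar>x\<bar> + \<bar>y\<bar>" using tri[of "(x,0)" "(0,y)"] x0 y0 by simp
qed

lemma absN_support:
  assumes N: "absolute_norm N" and a: "0 \<le> a" and b: "0 \<le> b"
  shows "\<exists>d1 d2. 0 \<le> d1 \<and> d1 \<le> 1 \<and> 0 \<le> d2 \<and> d2 \<le> 1 \<and>
     (\<forall>x y. 0 \<le> x \<longrightarrow> 0 \<le> y \<longrightarrow> d1 * x + d2 * y \<le> N (x, y)) \<and> d1 * a + d2 * b = N (a, b)"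
proof (cases "a = 0 \<and> b = 0")
  case True
  then show ?thesis using absN_facts[OF N] by (intro exI[of _ 0]) auto
next
  case False
  have hom: "\<And>c v. N (c *\<^sub>R v) = \<bar>c\<bar> * N v" and tri: "\<And>u v. N (u + v) \<le> N u + N v"
    and zero: "\<And>v. N v = 0 \<longleftrightarrow> v = 0"
    using N unfolding absolute_norm_def by auto
  have Nnn: "\<And>v. 0 \<le> N v" using absN_facts(6)[OF N] by (metis prod.collapse)
  define z where "z = (a, b)"
  define r where "r = N z"
  have r: "0 < r" using False zero[of z] Nnn[of z] unfolding r_def z_def by (auto simp: zero_prod_def)
  define S where "S = (\<lambda>x. x - z) ` {x. N x < r}"
  have "convex S"
    unfolding S_def
  proof (rule convex_translation_subtract)
    show "convex {x. N x < r}"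
      unfolding convex_def
    proof (intro allI impI ballI, simp)
      fix x y :: "real \<times> real" and u v :: real
      assume "N x < r" "N y < r" "0 \<le> u" "0 \<le> v" "u + v = 1"
      then have "N (u *\<^sub>R x + v *\<^sub>R y) \<le> u * N x + v * N y"
        using tri[of "u *\<^sub>R x" "v *\<^sub>R y"] hom[of u x] hom[of v y] by simp
      also have "\<dots> < r" 
      proof (cases "u = 0")
        case True then show ?thesis using \<open>N y < r\<close> \<open>u + v = 1\<close> by simp
      next
        case False
        then have "u * N x < u * r" using \<open>N x < r\<close> \<open>0 \<le> u\<close> by simp
        moreover have "v * N y \<le> v * r" using \<open>N y < r\<close> \<open>0 \<le> v\<close> by (simp add: mult_left_mono)
        ultimately show ?thesis using \<open>u + v = 1\<close> by (metis add.commute add_less_le_mono distrib_right mult_1)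
      qed
      finally show "N (u *\<^sub>R x + v *\<^sub>R y) < r" .
    qed
  qed
  moreover have "0 \<notin> S" unfolding S_def r_def by auto
  ultimately obtain w where w: "w \<noteq> 0" "\<And>x. x \<in> S \<Longrightarrow> 0 \<le> inner w x"
    using separating_hyperplane_set_0 by blast
  define c where "c = - w"
  define m where "m = inner c z"
  have c1: "inner c x \<le> m" if "N x < r" for x
  proof -
    have "x - z \<in> S" using that unfolding S_def by auto
    then have "0 \<le> inner w (x - z)" by (rule w)
    then show ?thesis unfolding c_def m_def by (simp add: inner_diff_right)
  qed
  have m0: "0 \<le> m" using c1[of 0] r zero[of 0] by simp
  have c2: "inner c x * r \<le> m * N x" for x
  proof (cases "N x = 0")
    case True then show ?thesis using zero[of x] m0 by simp
  next
    case False
    then have Nx: "0 < N x" using Nnn[of x] by simp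
    have "t * (inner c x * r / N x) \<le> m" if "0 < t" "t < 1" for t
    proof -
      have "N ((t * r / N x) *\<^sub>R x) = t * r" using hom[of "t * r / N x" x] that Nx r by simp
      then have "inner c ((t * r / N x) *\<^sub>R x) \<le> m" using c1[of "(t * r / N x) *\<^sub>R x"] that r by simp
      then show ?thesis by (simp add: algebra_simps)
    qed
    then have "inner c x * r / N x \<le> m" by (rule field_le_mult_one_interval)
    then show ?thesis using Nx by (simp add: divide_le_eq mult.commute)
  qed
  have mpos: "0 < m"
  proof (rule ccontr)
    assume "\<not> 0 < m"
    then have "m = 0" using m0 by simp
    then have "inner c x \<le> 0" for x using c2[of x] r by (simp add: mult_le_0_iff)
    then have "inner c c \<le> 0" "inner c (-c) \<le> 0" by auto
    then have "c = 0" by (metis inner_eq_zero_iff inner_ge_zero order_antisym)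
    then show False using w(1) unfolding c_def by simp
  qed
  obtain c1' c2' where cc: "c = (c1', c2')" by (cases c)
  define f1 where "f1 = r * c1' / m"
  define f2 where "f2 = r * c2' / m"
  have phi: "f1 * x + f2 * y \<le> N (x, y)" for x y
  proof -
    have "inner c (x, y) * r \<le> m * N (x, y)" by (rule c2)
    then show ?thesis using mpos unfolding f1_def f2_def cc
      by (simp add: inner_Pair algebra_simps add_divide_distrib[symmetric] divide_le_eq mult.commute)
  qed
  have mm: "m = c1' * a + c2' * b" unfolding m_def cc z_def by (simp add: inner_Pair)
  have "f1 * a + f2 * b = r * (c1' * a + c2' * b) / m" unfolding f1_def f2_def
    by (simp add: algebra_simps add_divide_distrib[symmetric])
  then have phiz: "f1 * a + f2 * b = r" using mpos unfolding mm[symmetric] by simp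
  have key: "\<bar>f1\<bar> * x + \<bar>f2\<bar> * y \<le> N (x, y)" if xy: "0 \<le> x" "0 \<le> y" for x y
  proof -
    define x' where "x' = (if 0 \<le> f1 then x else - x)"
    define y' where "y' = (if 0 \<le> f2 then y else - y)"
    have "\<bar>f1\<bar> * x + \<bar>f2\<bar> * y = f1 * x' + f2 * y'"
      unfolding x'_def y'_def by auto
    also have "\<dots> \<le> N (x', y')" by (rule phi)
    also have "\<dots> = N (x, y)" using absN_facts(8)[OF N, of x' y'] absN_facts(8)[OF N, of x y] xy
      unfolding x'_def y'_def by auto
    finally show ?thesis .
  qed
  have b1: "\<bar>f1\<bar> \<le> 1" using key[of 1 0] absN_facts(1)[OF N, of 1] by simp
  have b2: "\<bar>f2\<bar> \<le> 1" using key[of 0 1] absN_facts(2)[OF N, of 1] by simp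
  have eq: "\<bar>f1\<bar> * a + \<bar>f2\<bar> * b = N (a, b)"
  proof (rule antisym)
    show "\<bar>f1\<bar> * a + \<bar>f2\<bar> * b \<le> N (a, b)" using key a b by simp
    have "f1 * a \<le> \<bar>f1\<bar> * a" "f2 * b \<le> \<bar>f2\<bar> * b" using a b by (auto intro: mult_right_mono)
    then show "N (a, b) \<le> \<bar>f1\<bar> * a + \<bar>f2\<bar> * b" using phiz unfolding r_def z_def by simp
  qed
  show ?thesis
    apply (rule exI[of _ "\<bar>f1\<bar>"], rule exI[of _ "\<bar>f2\<bar>"])
    using key b1 b2 eq by auto
qed



definition busemann :: "'a::real_normed_vector \<Rightarrow> 'a \<Rightarrow> real" where
  "busemann w v = Inf (range (\<lambda>s. s * norm w + norm (v - s *\<^sub>R w)))"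

lemma busemann_bdd: "bdd_below (range (\<lambda>s. s * norm w + norm (v - s *\<^sub>R w)))"
proof (rule bdd_belowI[where m="- norm v"])
  fix x assume "x \<in> range (\<lambda>s. s * norm w + norm (v - s *\<^sub>R w))"
  then obtain s where x: "x = s * norm w + norm (v - s *\<^sub>R w)" by auto
  have "norm (s *\<^sub>R w) \<le> norm v + norm (v - s *\<^sub>R w)" by (metis norm_triangle_sub add.commute norm_minus_commute)
  moreover have "- (s * norm w) \<le> \<bar>s\<bar> * norm w" by (metis abs_ge_minus_self mult_minus_left mult_right_mono norm_ge_zero)
  ultimately show "- norm v \<le> x" unfolding x by simp
qed

lemma busemann_le: "busemann w v \<le> s * norm w + norm (v - s *\<^sub>R w)"
  unfolding busemann_def by (rule cInf_lower[OF _ busemann_bdd]) simp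

lemma busemann_lip: "busemann w v \<le> busemann w u + norm (v - u)"
proof -
  have "busemann w v - norm (v - u) \<le> busemann w u"
    unfolding busemann_def[of w u]
  proof (rule cInf_greatest)
    fix x assume "x \<in> range (\<lambda>s. s * norm w + norm (u - s *\<^sub>R w))"
    then obtain s where x: "x = s * norm w + norm (u - s *\<^sub>R w)" by auto
    have "norm (v - s *\<^sub>R w) \<le> norm (u - s *\<^sub>R w) + norm (v - u)"
      by (metis add.commute diff_add_cancel norm_triangle_ineq add_diff_eq diff_diff_eq2)
    then show "busemann w v - norm (v - u) \<le> x" using busemann_le[of w v s] unfolding x by simp
  qed simp
  then show ?thesis by simp
qed

lemma busemann_shift_le: "busemann w (v + t *\<^sub>R w) \<le> busemann w v + t * norm w"
proof -
  have "busemann w (v + t *\<^sub>R w) - t * norm w \<le> busemann w v"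
    unfolding busemann_def[of w v]
  proof (rule cInf_greatest)
    fix x assume "x \<in> range (\<lambda>s. s * norm w + norm (v - s *\<^sub>R w))"
    then obtain s where x: "x = s * norm w + norm (v - s *\<^sub>R w)" by auto
    have "busemann w (v + t *\<^sub>R w) \<le> (s + t) * norm w + norm (v + t *\<^sub>R w - (s + t) *\<^sub>R w)"
      by (rule busemann_le)
    also have "v + t *\<^sub>R w - (s + t) *\<^sub>R w = v - s *\<^sub>R w" by (simp add: algebra_simps)
    finally show "busemann w (v + t *\<^sub>R w) - t * norm w \<le> x" unfolding x by (simp add: algebra_simps)
  qed simp
  then show ?thesis by simp
qed

lemma busemann_shift: "busemann w (v + t *\<^sub>R w) = busemann w v + t * norm w"
proof (rule antisym)
  show "busemann w (v + t *\<^sub>R w) \<le> busemann w v + t * norm w" by (rule busemann_shift_le)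
  have "busemann w (v + t *\<^sub>R w + (-t) *\<^sub>R w) \<le> busemann w (v + t *\<^sub>R w) + (-t) * norm w"
    by (rule busemann_shift_le)
  then show "busemann w v + t * norm w \<le> busemann w (v + t *\<^sub>R w)" by simp
qed

lemma busemann_approx:
  "\<bar>busemann w v - busemann w u - d * norm w\<bar> \<le> norm (v - u - d *\<^sub>R w)"
proof -
  have "busemann w v \<le> busemann w (u + d *\<^sub>R w) + norm (v - (u + d *\<^sub>R w))" by (rule busemann_lip)
  moreover have "busemann w (u + d *\<^sub>R w) \<le> busemann w v + norm ((u + d *\<^sub>R w) - v)" by (rule busemann_lip)
  moreover have "norm ((u + d *\<^sub>R w) - v) = norm (v - u - d *\<^sub>R w)"
    by (metis minus_diff_eq norm_minus_cancel diff_diff_eq)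
  ultimately show ?thesis using busemann_shift[of w u d] by (simp add: abs_le_iff diff_diff_eq)
qed

lemma busemann_lip_abs: "\<bar>busemann w v - busemann w u\<bar> \<le> norm (v - u)"
  using busemann_lip[of w v u] busemann_lip[of w u v] by (simp add: abs_le_iff norm_minus_commute)



lemma lipschitz_diff':
  fixes f g :: "'m::metric_space \<Rightarrow> 'y::real_normed_vector"
  assumes "A-lipschitz_on UNIV f" "B-lipschitz_on UNIV g"
  shows "(A + B)-lipschitz_on UNIV (f - g)"
proof (rule lipschitzI')
  show "0 \<le> A + B" using assms lipschitz_on_nonneg by (metis add_nonneg_nonneg)
  fix p q
  have "norm ((f - g) p - (f - g) q) \<le> norm (f p - f q) + norm (g p - g q)"
  proof -
    have "(f - g) p - (f - g) q = (f p - f q) - (g p - g q)" by (simp add: algebra_simps)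
    then show ?thesis using norm_triangle_ineq4 by metis
  qed
  also have "\<dots> \<le> A * dist p q + B * dist p q"
    using lipschitz_onD[OF assms(1), of p q] lipschitz_onD[OF assms(2), of p q]
    by (simp add: dist_norm add_mono)
  finally show "norm ((f - g) p - (f - g) q) \<le> (A + B) * dist p q" by (simp add: distrib_right)
qed



lemma d1a_aux: "(d2::real) * b \<le> b \<Longrightarrow> d1 * a + d2 * b = n \<Longrightarrow> a \<le> n \<Longrightarrow> (1 - d1) * a \<le> b"
  by (simp add: left_diff_distrib)

lemma sum2_aux: "(x::real) \<le> A + B \<Longrightarrow> A = c1 \<Longrightarrow> B = c2 \<Longrightarrow> x \<le> c1 + c2"
  by simp

lemma sum3_aux: "(x::real) \<le> A + B \<Longrightarrow> A \<le> A1 + A2 \<Longrightarrow> A1 = c1 \<Longrightarrow> A2 = c2 \<Longrightarrow> B = c3 \<Longrightarrow> x \<le> c1 + c2 + c3"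
  by simp

theorem proposition3p4:
  fixes p0 :: "'m::complete_space"
    and T :: "'y::banach \<Rightarrow> 'y1::banach \<times> 'y2::banach"
    and N :: "real \<times> real \<Rightarrow> real"
  assumes "absolute_sum_decomp T N"
    and "dense_in_Lip0 p0 (NA p0 :: ('m \<Rightarrow> 'y) set)"
  shows "dense_in_Lip0 p0 (NA p0 :: ('m \<Rightarrow> 'y1) set)"
proof -
  have N: "absolute_norm N" and linT: "linear T" and bijT: "bij T"
    and normT: "\<And>v. norm v = N (norm (fst (T v)), norm (snd (T v)))"
    using assms(1) unfolding absolute_sum_decomp_def by auto
  define P1 where "P1 v = fst (T v)" for v
  define P2 where "P2 v = snd (T v)" for v
  have P1diff: "P1 (v - w) = P1 v - P1 w" and P2diff: "P2 (v - w) = P2 v - P2 w" for v w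
    unfolding P1_def P2_def using linear_diff[OF linT] by auto
  have P1scale: "P1 (c *\<^sub>R v) = c *\<^sub>R P1 v" and P2scale: "P2 (c *\<^sub>R v) = c *\<^sub>R P2 v" for c v
    unfolding P1_def P2_def using linear_scale[OF linT] by auto
  have P1add: "P1 (v + w) = P1 v + P1 w" and P2add: "P2 (v + w) = P2 v + P2 w" for v w
    unfolding P1_def P2_def using linear_add[OF linT] by auto
  have normP: "norm v = N (norm (P1 v), norm (P2 v))" for v unfolding P1_def P2_def by (rule normT)
  have P1le: "norm (P1 v) \<le> norm v" and P2le: "norm (P2 v) \<le> norm v" for v
    using absN_facts(3,4)[OF N, where x="norm (P1 v)" and y="norm (P2 v)"] normP[of v] by auto
  have blP1: "bounded_linear P1"
    by (rule bounded_linear_intro[where K=1]) (use P1add P1scale P1le in auto)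
  have blP2: "bounded_linear P2"
    by (rule bounded_linear_intro[where K=1]) (use P2add P2scale P2le in auto)
  have P10: "P1 0 = 0" "P2 0 = 0" using P1scale[of 0 0] P2scale[of 0 0] by auto
  define S where "S = inv T"
  have TS: "T (S z) = z" for z unfolding S_def using bijT by (simp add: bij_is_surj surj_f_inv_f)
  have Sdiff: "S z - S z' = S (z - z')" for z z'
  proof -
    have "T (S z - S z') = T (S (z - z'))" using TS linear_diff[OF linT] by simp
    then show ?thesis using bijT by (simp add: bij_is_inj inj_eq)
  qed
  have S0: "S 0 = 0" using Sdiff[of 0 0] by simp
  have normS: "norm (S (x, 0)) = norm x" for x
    using normT[of "S (x, 0)"] TS[of "(x, 0)"] absN_facts(1)[OF N, of "norm x"] by simp
  show ?thesis
    unfolding dense_in_Lip0_def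
  proof (intro ballI allI impI)
    fix f :: "'m \<Rightarrow> 'y1" and e :: real
    assume fL: "f \<in> Lip0 p0" and e: "0 < e"
    obtain Cf where Cf: "Cf-lipschitz_on UNIV f" using fL by (auto simp: Lip0_def)
    have fp0: "f p0 = 0" using fL by (simp add: Lip0_def)
    define L where "L = lipnorm f"
    have L0: "0 \<le> L" unfolding L_def by (rule lipnorm_nonneg'[OF Cf])
    have fbound: "norm (f p - f q) \<le> L * dist p q" for p q unfolding L_def by (rule lipnorm_bound[OF Cf])
    show "\<exists>g\<in>NA p0. lipnorm (f - g) < e"
    proof (cases "L < e")
      case True
      have z0: "((\<lambda>_. 0) :: 'm \<Rightarrow> 'y) \<in> Lip0 p0"
        using lipschitzI'[of 0 "(\<lambda>_. 0) :: 'm \<Rightarrow> 'y"] unfolding Lip0_def by (simp; blast)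
      have "\<exists>g\<in>(NA p0 :: ('m \<Rightarrow> 'y) set). lipnorm ((\<lambda>_. 0) - g) < (1::real)"
        by (rule assms(2)[unfolded dense_in_Lip0_def, rule_format, OF z0 zero_less_one])
      then obtain G0 :: "'m \<Rightarrow> 'y" where "G0 \<in> NA p0" by blast
      then obtain p q :: "nat \<Rightarrow> 'm" where pq: "\<forall>n. p n \<noteq> q n"
        unfolding NA_def attains_norm_toward_def by blast
      have ln0: "lipnorm ((\<lambda>_. 0) :: 'm \<Rightarrow> 'y1) = 0"
        using lipnorm_least[of 0 "(\<lambda>_. 0) :: 'm \<Rightarrow> 'y1"] lipnorm_nonneg'[of 0 "(\<lambda>_. 0) :: 'm \<Rightarrow> 'y1"]
          lipschitzI'[of 0 "(\<lambda>_. 0) :: 'm \<Rightarrow> 'y1"]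
        by simp
      have z1: "((\<lambda>_. 0) :: 'm \<Rightarrow> 'y1) \<in> Lip0 p0"
        using lipschitzI'[of 0 "(\<lambda>_. 0) :: 'm \<Rightarrow> 'y1"] unfolding Lip0_def by (simp; blast)
      have z2: "attains_norm_toward ((\<lambda>_. 0) :: 'm \<Rightarrow> 'y1) 0"
        unfolding attains_norm_toward_def using pq ln0
        by (intro exI[of _ p] exI[of _ q]) simp
      have "((\<lambda>_. 0) :: 'm \<Rightarrow> 'y1) \<in> NA p0"
        unfolding NA_def using z1 z2 by blast
      moreover have "f - (\<lambda>_. 0) = f" by (rule ext) simp
      then have "lipnorm (f - (\<lambda>_. 0)) < e" using True L_def by simp
      ultimately show ?thesis by blast
    next
      case False
      then have Le: "e \<le> L" by simp
      define \<delta> where "\<delta> = min (e / 5) (L / 4)"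
      have \<delta>: "0 < \<delta>" "\<delta> \<le> e / 5" "\<delta> \<le> L / 4" unfolding \<delta>_def using e Le by auto
      define F where "F p = S (f p, 0)" for p
      have Fdiff: "F p - F q = S (f p - f q, 0)" for p q unfolding F_def by (simp add: Sdiff)
      have Fnorm: "norm (F p - F q) = norm (f p - f q)" for p q unfolding Fdiff normS ..
      have CF: "Cf-lipschitz_on UNIV F"
      proof (rule lipschitzI'[OF lipschitz_on_nonneg[OF Cf]])
        fix p q
        show "norm (F p - F q) \<le> Cf * dist p q"
          unfolding Fnorm using lipschitz_onD[OF Cf, of p q] by (simp only: dist_norm UNIV_I simp_thms)
      qed
      have "F p0 = 0" unfolding F_def fp0 zero_prod_def[symmetric] by (rule S0)
      then have FL: "F \<in> Lip0 p0" unfolding Lip0_def using CF by blast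
      obtain G where GNA: "G \<in> NA p0" and GD: "lipnorm (F - G) < \<delta>"
        using assms(2) FL \<delta>(1) unfolding dense_in_Lip0_def by blast
      have GL: "G \<in> Lip0 p0" and "\<exists>y. attains_norm_toward G y" using GNA unfolding NA_def by auto
      then obtain y p q where pq: "\<And>n. p n \<noteq> q n"
        and Glim: "((\<lambda>n. (1 / dist (p n) (q n)) *\<^sub>R (G (p n) - G (q n))) \<longlongrightarrow> y) sequentially"
        and Gy: "norm y = lipnorm G"
        unfolding attains_norm_toward_def by blast
      obtain CG where CG: "CG-lipschitz_on UNIV G" using GL by (auto simp: Lip0_def)
      have Gp0: "G p0 = 0" using GL by (simp add: Lip0_def)
      define K where "K = lipnorm G"
      have Gbound: "norm (G p - G q) \<le> K * dist p q" for p q unfolding K_def by (rule lipnorm_bound[OF CG])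
      define D where "D = lipnorm (F - G)"
      have D0: "0 \<le> D" unfolding D_def by (rule lipnorm_nonneg'[OF lipschitz_diff'[OF CF CG]])
      have Dbound: "norm ((F - G) p - (F - G) q) \<le> D * dist p q" for p q
        unfolding D_def by (rule lipnorm_bound[OF lipschitz_diff'[OF CF CG]])
      define g1 where "g1 p = P1 (G p)" for p
      define g2 where "g2 p = P2 (G p)" for p
      have P1F: "P1 (F p) = f p" and P2F: "P2 (F p) = 0" for p
        unfolding P1_def P2_def F_def TS by auto
      have E1: "norm ((f p - g1 p) - (f q - g1 q)) \<le> D * dist p q" for p q
      proof -
        have "P1 ((F - G) p - (F - G) q) = (f p - g1 p) - (f q - g1 q)"
          by (simp add: P1diff P1F g1_def)
        then show ?thesis using P1le[of "(F - G) p - (F - G) q"] Dbound[of p q] by simp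
      qed
      have E2: "norm (g2 p - g2 q) \<le> D * dist p q" for p q
      proof -
        have "P2 ((F - G) p - (F - G) q) = - (g2 p - g2 q)"
          by (simp add: P2diff P2F g2_def)
        then have "norm (g2 p - g2 q) = norm (P2 ((F - G) p - (F - G) q))" by (simp add: norm_minus_commute)
        then show ?thesis using P2le[of "(F - G) p - (F - G) q"] Dbound[of p q] by linarith
      qed
      have E3: "N (norm (g1 p - g1 q), norm (g2 p - g2 q)) \<le> K * dist p q" for p q
        using normP[of "G p - G q"] Gbound[of p q] by (simp add: g1_def g2_def P1diff P2diff)
      have E4: "L \<le> K + D"
        unfolding L_def
      proof (rule lipnorm_least)
        show "0 \<le> K + D" using D0 lipnorm_nonneg'[OF CG] K_def by simp
        fix p' q'
        have "F p' - F q' = (G p' - G q') + ((F - G) p' - (F - G) q')" by (simp add: algebra_simps)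
        then have "norm (F p' - F q') \<le> norm (G p' - G q') + norm ((F - G) p' - (F - G) q')"
          by (metis norm_triangle_ineq)
        then show "norm (f p' - f q') \<le> (K + D) * dist p' q'"
          using Fnorm Gbound[of p' q'] Dbound[of p' q'] by (simp add: distrib_right)
      qed
      define y1 where "y1 = P1 y"
      define y2 where "y2 = P2 y"
      have quot1: "(1 / dist (p n) (q n)) *\<^sub>R (g1 (p n) - g1 (q n)) = P1 ((1 / dist (p n) (q n)) *\<^sub>R (G (p n) - G (q n)))" for n
        by (simp add: g1_def P1diff P1scale)
      have quot2: "(1 / dist (p n) (q n)) *\<^sub>R (g2 (p n) - g2 (q n)) = P2 ((1 / dist (p n) (q n)) *\<^sub>R (G (p n) - G (q n)))" for n
        by (simp add: g2_def P2diff P2scale)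
      have lim1: "((\<lambda>n. (1 / dist (p n) (q n)) *\<^sub>R (g1 (p n) - g1 (q n))) \<longlongrightarrow> y1) sequentially"
        unfolding quot1 y1_def by (rule bounded_linear.tendsto[OF blP1 Glim])
      have lim2: "((\<lambda>n. (1 / dist (p n) (q n)) *\<^sub>R (g2 (p n) - g2 (q n))) \<longlongrightarrow> y2) sequentially"
        unfolding quot2 y2_def by (rule bounded_linear.tendsto[OF blP2 Glim])
      define a where "a = norm y1"
      define b where "b = norm y2"
      have bD: "b \<le> D"
      proof -
        have "norm ((1 / dist (p n) (q n)) *\<^sub>R (g2 (p n) - g2 (q n))) \<le> D" for n
          using E2[of "p n" "q n"] pq[of n] by (simp add: divide_le_eq)
        then show ?thesis unfolding b_def using LIMSEQ_le_const2[OF tendsto_norm[OF lim2]] by blast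
      qed
      have Kab: "K = N (a, b)" unfolding K_def a_def b_def y1_def y2_def using Gy normP by simp
      have aK: "K \<le> a + b" using absN_facts(5)[OF N, of a b] Kab a_def b_def by simp
      have Ka: "a \<le> K" using absN_facts(3)[OF N, of a b] Kab a_def by simp
      have apos: "L / 2 \<le> a" using aK E4 bD \<delta> GD D_def by simp
      have a0: "0 < a" using apos Le e by simp
      have b0: "0 \<le> b" unfolding b_def by simp
      obtain d1 d2 where d: "0 \<le> d1" "d1 \<le> 1" "0 \<le> d2" "d2 \<le> 1"
        and dN: "\<And>x y. 0 \<le> x \<Longrightarrow> 0 \<le> y \<Longrightarrow> d1 * x + d2 * y \<le> N (x, y)"
        and dab: "d1 * a + d2 * b = N (a, b)"
        using absN_support[OF N a0[THEN less_imp_le] b0] by blast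
      have d1a: "(1 - d1) * a \<le> b"
      proof -
        have "d2 * b \<le> b" by (rule mult_left_le_one_le[OF b0 d(3) d(4)])
        then show ?thesis using dab Ka unfolding Kab by (rule d1a_aux)
      qed
      have d1nn: "0 \<le> 1 - d1" using d(2) by (simp only: diff_ge_0_iff_ge)
      define u where "u = (1 / a) *\<^sub>R y1"
      have u1: "norm u = 1" unfolding u_def using a0 a_def by simp
      have y1u: "y1 = a *\<^sub>R u" unfolding u_def using a0 by simp
      define lam where "lam = busemann y2"
      define h where "h p = d1 *\<^sub>R g1 p + (d2 * (lam (g2 p) - lam (g2 p0))) *\<^sub>R u" for p
      have hdiff: "h p - h q = d1 *\<^sub>R (g1 p - g1 q) + (d2 * (lam (g2 p) - lam (g2 q))) *\<^sub>R u" for p q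
        unfolding h_def by (simp add: algebra_simps)
      have hp0: "h p0 = 0" unfolding h_def g1_def using Gp0 P10 by simp
      have hbound: "norm (h p - h q) \<le> K * dist p q" for p q
      proof -
        have "norm (h p - h q) \<le> d1 * norm (g1 p - g1 q) + d2 * \<bar>lam (g2 p) - lam (g2 q)\<bar>"
        proof -
          have "norm (h p - h q) \<le> norm (d1 *\<^sub>R (g1 p - g1 q)) + norm ((d2 * (lam (g2 p) - lam (g2 q))) *\<^sub>R u)"
            unfolding hdiff by (rule norm_triangle_ineq)
          moreover have "norm (d1 *\<^sub>R (g1 p - g1 q)) = d1 * norm (g1 p - g1 q)"
            by (simp only: norm_scaleR abs_of_nonneg[OF d(1)])
          moreover have "norm ((d2 * (lam (g2 p) - lam (g2 q))) *\<^sub>R u) = d2 * \<bar>lam (g2 p) - lam (g2 q)\<bar>"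
            by (simp only: norm_scaleR abs_mult abs_of_nonneg[OF d(3)] u1 mult_1_right)
          ultimately show ?thesis by (rule sum2_aux)
        qed
        also have "\<dots> \<le> d1 * norm (g1 p - g1 q) + d2 * norm (g2 p - g2 q)"
          using busemann_lip_abs[of y2 "g2 p" "g2 q"] d unfolding lam_def by (simp add: mult_left_mono)
        also have "\<dots> \<le> N (norm (g1 p - g1 q), norm (g2 p - g2 q))" by (rule dN) auto
        also have "\<dots> \<le> K * dist p q" by (rule E3)
        finally show ?thesis .
      qed
      have K0: "0 \<le> K" unfolding K_def by (rule lipnorm_nonneg'[OF CG])
      have Ch: "K-lipschitz_on UNIV h" using K0 hbound by (rule lipschitzI')
      have hL: "h \<in> Lip0 p0" unfolding Lip0_def using hp0 Ch by blast
      have hle: "lipnorm h \<le> K" using K0 hbound by (rule lipnorm_least)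
      have lamlim: "((\<lambda>n. (lam (g2 (p n)) - lam (g2 (q n))) / dist (p n) (q n)) \<longlongrightarrow> b) sequentially"
      proof -
        have "((\<lambda>n. (lam (g2 (p n)) - lam (g2 (q n))) / dist (p n) (q n) - b) \<longlongrightarrow> 0) sequentially"
        proof (rule Lim_null_comparison)
          show "((\<lambda>n. norm ((1 / dist (p n) (q n)) *\<^sub>R (g2 (p n) - g2 (q n)) - y2)) \<longlongrightarrow> 0) sequentially"
            using lim2 by (simp add: tendsto_norm_zero LIM_zero)
          show "\<forall>\<^sub>F n in sequentially. norm ((lam (g2 (p n)) - lam (g2 (q n))) / dist (p n) (q n) - b)
                  \<le> norm ((1 / dist (p n) (q n)) *\<^sub>R (g2 (p n) - g2 (q n)) - y2)"
          proof (rule always_eventually, rule allI)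
            fix n
            define dd where "dd = dist (p n) (q n)"
            have dd: "0 < dd" unfolding dd_def using pq[of n] by simp
            have "\<bar>lam (g2 (p n)) - lam (g2 (q n)) - dd * b\<bar> \<le> norm (g2 (p n) - g2 (q n) - dd *\<^sub>R y2)"
              unfolding lam_def b_def by (rule busemann_approx)
            also have "g2 (p n) - g2 (q n) - dd *\<^sub>R y2 = dd *\<^sub>R ((1 / dd) *\<^sub>R (g2 (p n) - g2 (q n)) - y2)"
              using dd by (simp add: algebra_simps)
            finally have "\<bar>lam (g2 (p n)) - lam (g2 (q n)) - dd * b\<bar> \<le> dd * norm ((1 / dd) *\<^sub>R (g2 (p n) - g2 (q n)) - y2)"
              using dd by simp
            moreover have "(lam (g2 (p n)) - lam (g2 (q n))) / dd - b = (lam (g2 (p n)) - lam (g2 (q n)) - dd * b) / dd"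
              using dd by (simp add: field_simps)
            ultimately show "norm ((lam (g2 (p n)) - lam (g2 (q n))) / dist (p n) (q n) - b)
                  \<le> norm ((1 / dist (p n) (q n)) *\<^sub>R (g2 (p n) - g2 (q n)) - y2)"
              using dd unfolding dd_def[symmetric] by (simp add: divide_le_eq mult.commute)
          qed
        qed
        then show ?thesis by (simp add: LIM_zero_iff)
      qed
      have hquot: "(1 / dist (p n) (q n)) *\<^sub>R (h (p n) - h (q n)) =
          d1 *\<^sub>R ((1 / dist (p n) (q n)) *\<^sub>R (g1 (p n) - g1 (q n)))
          + (d2 * ((lam (g2 (p n)) - lam (g2 (q n))) / dist (p n) (q n))) *\<^sub>R u" for n
        unfolding hdiff by (simp add: algebra_simps divide_inverse)
      have hlim: "((\<lambda>n. (1 / dist (p n) (q n)) *\<^sub>R (h (p n) - h (q n))) \<longlongrightarrow> d1 *\<^sub>R y1 + (d2 * b) *\<^sub>R u) sequentially"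
        unfolding hquot by (intro tendsto_intros lim1 lamlim)
      have limval: "d1 *\<^sub>R y1 + (d2 * b) *\<^sub>R u = K *\<^sub>R u"
        unfolding y1u using dab Kab by (simp add: algebra_simps scaleR_add_left[symmetric])
      have "norm (K *\<^sub>R u) \<le> lipnorm h" using lim_le_lipnorm[OF Ch hlim[unfolded limval]] .
      then have hK: "lipnorm h = K" using hle u1 K0 by simp
      have att: "attains_norm_toward h (K *\<^sub>R u)"
      proof -
        have n1: "norm (K *\<^sub>R u) = lipnorm h" using hK u1 K0 by simp
        have "(\<forall>n. p n \<noteq> q n) \<and>
            ((\<lambda>n. (1 / dist (p n) (q n)) *\<^sub>R (h (p n) - h (q n))) \<longlongrightarrow> K *\<^sub>R u) sequentially \<and>
            norm (K *\<^sub>R u) = lipnorm h"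
          using pq hlim[unfolded limval] n1 by blast
        then show ?thesis unfolding attains_norm_toward_def by blast
      qed
      have hNA: "h \<in> NA p0"
        unfolding NA_def using hL att by blast
      have close: "lipnorm (f - h) \<le> 4 * D"
      proof (rule lipnorm_least)
        show "0 \<le> 4 * D" using D0 by simp
        fix p' q'
        have eqn: "(f - h) p' - (f - h) q' = d1 *\<^sub>R ((f p' - g1 p') - (f q' - g1 q')) + (1 - d1) *\<^sub>R (f p' - f q')
            - (d2 * (lam (g2 p') - lam (g2 q'))) *\<^sub>R u"
          using hdiff[of p' q'] by (simp add: algebra_simps)
        have "norm ((f - h) p' - (f - h) q') \<le> d1 * norm ((f p' - g1 p') - (f q' - g1 q'))
            + (1 - d1) * norm (f p' - f q') + d2 * \<bar>lam (g2 p') - lam (g2 q')\<bar>"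
        proof -
          have "norm ((f - h) p' - (f - h) q') \<le> norm (d1 *\<^sub>R ((f p' - g1 p') - (f q' - g1 q')) + (1 - d1) *\<^sub>R (f p' - f q'))
            + norm ((d2 * (lam (g2 p') - lam (g2 q'))) *\<^sub>R u)"
            unfolding eqn by (rule norm_triangle_ineq4)
          moreover have "norm (d1 *\<^sub>R ((f p' - g1 p') - (f q' - g1 q')) + (1 - d1) *\<^sub>R (f p' - f q'))
             \<le> norm (d1 *\<^sub>R ((f p' - g1 p') - (f q' - g1 q'))) + norm ((1 - d1) *\<^sub>R (f p' - f q'))"
            by (rule norm_triangle_ineq)
          moreover have "norm (d1 *\<^sub>R ((f p' - g1 p') - (f q' - g1 q'))) = d1 * norm ((f p' - g1 p') - (f q' - g1 q'))"
            by (simp only: norm_scaleR abs_of_nonneg[OF d(1)])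
          moreover have "norm ((1 - d1) *\<^sub>R (f p' - f q')) = (1 - d1) * norm (f p' - f q')"
            by (simp only: norm_scaleR abs_of_nonneg[OF d1nn])
          moreover have "norm ((d2 * (lam (g2 p') - lam (g2 q'))) *\<^sub>R u) = d2 * \<bar>lam (g2 p') - lam (g2 q')\<bar>"
            by (simp only: norm_scaleR abs_mult abs_of_nonneg[OF d(3)] u1 mult_1_right)
          ultimately show ?thesis by (rule sum3_aux)
        qed
        also have "\<dots> \<le> d1 * (D * dist p' q') + (1 - d1) * (L * dist p' q') + d2 * (D * dist p' q')"
          using E1[of p' q'] fbound[of p' q'] E2[of p' q'] busemann_lip_abs[of y2 "g2 p'" "g2 q'"] d
          unfolding lam_def by (intro add_mono mult_left_mono) auto
        also have "\<dots> \<le> D * dist p' q' + 2 * D * dist p' q' + D * dist p' q'"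
        proof -
          have "(1 - d1) * L \<le> 2 * D"
          proof -
            have "(1 - d1) * L \<le> (1 - d1) * (2 * a)" using apos d by (intro mult_left_mono) auto
            also have "\<dots> \<le> 2 * b" using d1a by simp
            finally show ?thesis using bD by simp
          qed
          then have t2: "(1 - d1) * (L * dist p' q') \<le> 2 * D * dist p' q'"
            by (metis mult.assoc mult_right_mono zero_le_dist)
          have t1: "d1 * (D * dist p' q') \<le> D * dist p' q'" and t3: "d2 * (D * dist p' q') \<le> D * dist p' q'"
            using d D0 by (auto intro!: mult_left_le_one_le)
          show ?thesis by (rule add_mono[OF add_mono[OF t1 t2] t3])
        qed
        finally show "norm ((f - h) p' - (f - h) q') \<le> 4 * D * dist p' q'" by (simp add: algebra_simps)
      qed
      have "lipnorm (f - h) < e" using close GD D_def \<delta> by simp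
      then show ?thesis using hNA by blast
    qed
  qed
qed

end
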